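(* Let $G$ be a connected edge-stable equimatchable graph that has a cut vertex. Then $G$ is bipartite.
   Context: All graphs are finite and simple. A graph is equimatchable if all its maximal matchings have the same cardinality. An equimatchable graph $G$ is edge-stable if $G\setminus e$ (remove the edge $e$, keep all vertices) is equimatchable for every $e\in E(G)$. A cut vertex of a connected graph is a vertex whose removal disconnects the graph. *)

theory Defs
  imports Main
begin

definition graph :: "'a set \<Rightarrow> 'a set set \<Rightarrow> bool" where
  "graph V E \<longleftrightarrow> finite V \<and> (\<forall>e\<in>E. \<exists>u v. e = {u, v} \<and> u \<noteq> v \<and> u \<in> V \<and> v \<in> V)"

definition matching :: "'a set set \<Rightarrow> 'a set set \<Rightarrow> bool" where
  "matching E M \<longleftrightarrow> M \<subseteq> E \<and> (\<forall>e1\<in>M. \<forall>e2\<in>M. e1 \<noteq> e2 \<longrightarrow> e1 \<inter> e2 = {})"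

definition maximal_matching :: "'a set set \<Rightarrow> 'a set set \<Rightarrow> bool" where
  "maximal_matching E M \<longleftrightarrow> matching E M \<and> (\<forall>M'. matching E M' \<longrightarrow> M \<subseteq> M' \<longrightarrow> M' = M)"

definition equimatchable :: "'a set set \<Rightarrow> bool" where
  "equimatchable E \<longleftrightarrow>
     (\<forall>M1 M2. maximal_matching E M1 \<longrightarrow> maximal_matching E M2 \<longrightarrow> card M1 = card M2)"

(* G \ e keeps all vertices; matchings do not depend on isolated vertices *)
definition edge_stable :: "'a set set \<Rightarrow> bool" where
  "edge_stable E \<longleftrightarrow> equimatchable E \<and> (\<forall>e\<in>E. equimatchable (E - {e}))"

definition connected_graph :: "'a set \<Rightarrow> 'a set set \<Rightarrow> bool" where
  "connected_graph V E \<longleftrightarrow> V \<noteq> {} \<and>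
     (\<forall>u\<in>V. \<forall>v\<in>V. (u, v) \<in> {(x, y). {x, y} \<in> E}\<^sup>*)"

definition del_vertex :: "'a \<Rightarrow> 'a set set \<Rightarrow> 'a set set" where
  "del_vertex v E = {e \<in> E. v \<notin> e}"

definition cut_vertex :: "'a set \<Rightarrow> 'a set set \<Rightarrow> 'a \<Rightarrow> bool" where
  "cut_vertex V E v \<longleftrightarrow> v \<in> V \<and>
     (\<exists>x\<in>V - {v}. \<exists>y\<in>V - {v}. (x, y) \<notin> {(a, b). {a, b} \<in> del_vertex v E}\<^sup>*)"

definition bipartite :: "'a set \<Rightarrow> 'a set set \<Rightarrow> bool" where
  "bipartite V E \<longleftrightarrow> (\<exists>A B. A \<inter> B = {} \<and> A \<union> B = V \<and>
     (\<forall>e\<in>E. \<exists>a\<in>A. \<exists>b\<in>B. e = {a, b}))"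

end

theory Submission
  imports Defs
begin


lemma graph_edge:
  assumes "graph V E" "e \<in> E"
  obtains u v where "e = {u,v}" "u \<noteq> v" "u \<in> V" "v \<in> V"
  using assms unfolding graph_def by blast

lemma graph_finite_E: assumes "graph V E" shows "finite E"
proof -
  have "E \<subseteq> Pow V"
  proof
    fix e assume "e \<in> E"
    then obtain u v where "e = {u,v}" "u \<in> V" "v \<in> V" using assms unfolding graph_def by blast
    then show "e \<in> Pow V" by simp
  qed
  moreover have "finite V" using assms unfolding graph_def by simp
  ultimately have "finite (Pow V)" by simp
  then show ?thesis using \<open>E \<subseteq> Pow V\<close> by (rule finite_subset[rotated])
qed

lemma graph_edge_neq: "graph V E \<Longrightarrow> {u,v} \<in> E \<Longrightarrow> u \<noteq> v"
proof
  assume g: "graph V E" and e: "{u,v} \<in> E" and uv: "u = v"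
  from g e obtain a b where "{u,v} = {a,b}" "a \<noteq> b" unfolding graph_def by meson
  then show False using uv by (metis doubleton_eq_iff)
qed
lemma graph_edge_V: "graph V E \<Longrightarrow> {u,v} \<in> E \<Longrightarrow> u \<in> V \<and> v \<in> V"
  unfolding graph_def by (metis doubleton_eq_iff)

lemma graph_Union: assumes "graph V E" "M \<subseteq> E" shows "\<Union>M \<subseteq> V"
proof
  fix x assume "x \<in> \<Union>M"
  then obtain e where e: "e \<in> M" "x \<in> e" by blast
  then obtain u v where "e={u,v}" "u\<in>V" "v\<in>V" using graph_edge[OF assms(1)] assms(2) by (metis subsetD)
  then show "x \<in> V" using e by blast
qed

lemma matching_unique:
  "matching E M \<Longrightarrow> e \<in> M \<Longrightarrow> d \<in> M \<Longrightarrow> x \<in> e \<Longrightarrow> x \<in> d \<Longrightarrow> d = e"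
  unfolding matching_def by blast

lemma matching_sub: "matching E M \<Longrightarrow> N \<subseteq> M \<Longrightarrow> matching E N"
  unfolding matching_def by blast

lemma matching_insert:
  "matching E (insert d N) \<longleftrightarrow> matching E N \<and> d \<in> E \<and> (\<forall>e\<in>N. e \<noteq> d \<longrightarrow> e \<inter> d = {})"
proof
  assume "matching E (insert d N)" then show "matching E N \<and> d \<in> E \<and> (\<forall>e\<in>N. e \<noteq> d \<longrightarrow> e \<inter> d = {})"
    unfolding matching_def by auto
next
  assume h: "matching E N \<and> d \<in> E \<and> (\<forall>e\<in>N. e \<noteq> d \<longrightarrow> e \<inter> d = {})"
  show "matching E (insert d N)" unfolding matching_def
  proof (intro conjI ballI impI)
    show "insert d N \<subseteq> E" using h unfolding matching_def by auto
    fix e1 e2 assume "e1 \<in> insert d N" "e2 \<in> insert d N" "e1 \<noteq> e2"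
    then show "e1 \<inter> e2 = {}" using h unfolding matching_def by (auto simp: Int_commute)
  qed
qed

lemma matching_insert_free:
  assumes "matching E N" "d \<in> E" "d \<inter> \<Union>N = {}"
  shows "matching E (insert d N)"
  using assms unfolding matching_insert by auto

lemma Union_remove:
  assumes "matching E M" "e \<in> M" shows "\<Union>(M - {e}) = \<Union>M - e"
  using assms unfolding matching_def by auto

lemma maximal_iff:
  assumes "graph V E" "matching E M"
  shows "maximal_matching E M \<longleftrightarrow> (\<forall>e\<in>E. e \<inter> \<Union>M \<noteq> {})"
proof
  assume mm: "maximal_matching E M"
  show "\<forall>e\<in>E. e \<inter> \<Union>M \<noteq> {}"
  proof (intro ballI notI)
    fix e assume e: "e \<in> E" "e \<inter> \<Union>M = {}"
    then obtain u v where uv: "e = {u,v}" using graph_edge[OF assms(1)] by metis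
    have "u \<in> e" using uv by simp
    then have "e \<notin> M" using e(2) by auto
    moreover have "matching E (insert e M)" using matching_insert_free[OF assms(2) e(1) e(2)] .
    moreover have "M \<subseteq> insert e M" by auto
    ultimately show False using mm unfolding maximal_matching_def by auto
  qed
next
  assume h: "\<forall>e\<in>E. e \<inter> \<Union>M \<noteq> {}"
  show "maximal_matching E M" unfolding maximal_matching_def
  proof (intro conjI allI impI)
    show "matching E M" by fact
    fix M' assume m': "matching E M'" "M \<subseteq> M'"
    show "M' = M"
    proof (rule ccontr)
      assume "M' \<noteq> M"
      then obtain e where e: "e \<in> M'" "e \<notin> M" using m' by auto
      then have "e \<in> E" using m' unfolding matching_def by auto
      then have "e \<inter> \<Union>M \<noteq> {}" using h by auto
      then obtain x where "x \<in> e" "x \<in> \<Union>M" by blast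
      then obtain d where d: "d \<in> M" "x \<in> d" by auto
      then have "d \<in> M'" "d \<noteq> e" using m' e by auto
      then have "d \<inter> e = {}" using m'(1) e(1) unfolding matching_def by auto
      then show False using d \<open>x \<in> e\<close> by auto
    qed
  qed
qed

lemma maximal_matchingD: "maximal_matching E M \<Longrightarrow> matching E M"
  unfolding maximal_matching_def by blast

lemma maximal_meets:
  "graph V E \<Longrightarrow> maximal_matching E M \<Longrightarrow> e \<in> E \<Longrightarrow> e \<inter> \<Union>M \<noteq> {}"
  using maximal_iff maximal_matchingD by blast

lemma maximal_edge_free:
  "graph V E \<Longrightarrow> maximal_matching E M \<Longrightarrow> {a,b} \<in> E \<Longrightarrow> a \<notin> \<Union>M \<Longrightarrow> b \<notin> \<Union>M \<Longrightarrow> False"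
  using maximal_meets by blast


lemma extend_maximal:
  assumes "finite E" "matching E N"
  shows "\<exists>M. maximal_matching E M \<and> N \<subseteq> M"
proof -
  let ?P = "\<lambda>M. matching E M \<and> N \<subseteq> M"
  have b: "\<forall>y. ?P y \<longrightarrow> card y < Suc (card E)"
    using assms(1) unfolding matching_def by (auto simp: less_Suc_eq_le intro: card_mono)
  obtain M where M: "?P M" "\<forall>y. ?P y \<longrightarrow> card y \<le> card M"
    using ex_has_greatest_nat[of ?P N card "Suc (card E)"] assms(2) b by blast
  have "maximal_matching E M" unfolding maximal_matching_def
  proof (intro conjI allI impI)
    show "matching E M" using M by blast
    fix M' assume "matching E M'" "M \<subseteq> M'"
    moreover have "finite M'" using \<open>matching E M'\<close> assms(1) unfolding matching_def
      using finite_subset by blast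
    ultimately show "M' = M" using M by (metis card_seteq subset_trans)
  qed
  then show ?thesis using M by blast
qed

lemma matching_finite: "finite E \<Longrightarrow> matching E M \<Longrightarrow> finite M"
  unfolding matching_def using finite_subset by blast

lemma eq_card_le:
  assumes "finite E" "equimatchable E" "maximal_matching E M" "matching E N"
  shows "card N \<le> card M"
proof -
  obtain N' where "maximal_matching E N'" "N \<subseteq> N'" using extend_maximal assms by blast
  moreover have "finite N'" using calculation matching_finite[OF assms(1)] maximal_matchingD by blast
  ultimately show ?thesis using assms(2,3) unfolding equimatchable_def by (metis card_mono)
qed

lemma eq_card_max:
  assumes "finite E" "equimatchable E" "maximal_matching E M" "matching E N" "card N = card M"
  shows "maximal_matching E N"
proof -
  obtain N' where N': "maximal_matching E N'" "N \<subseteq> N'" using extend_maximal assms by blast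
  moreover have "finite N'" using calculation matching_finite[OF assms(1)] maximal_matchingD by blast
  moreover have "card N' = card N" using N' assms(2,3,5) unfolding equimatchable_def by metis
  ultimately have "N = N'" by (metis card_subset_eq)
  then show ?thesis using N' by simp
qed

lemma card_swap1:
  assumes "finite M" "e \<in> M" "d \<notin> M"
  shows "card (insert d (M - {e})) = card M"
proof -
  have "card (M - {e}) = card M - 1" using assms by (simp add: card_Diff_singleton)
  moreover have "card M > 0" using assms card_gt_0_iff by blast
  moreover have "d \<notin> M - {e}" using assms by blast
  ultimately show ?thesis using assms by simp
qed



lemma graph_mono: assumes "graph V E" "E' \<subseteq> E" shows "graph V E'"
  using assms unfolding graph_def by (meson subsetD)

lemma matching_mono_E: "matching E M \<Longrightarrow> M \<subseteq> E' \<Longrightarrow> matching E' M"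
  unfolding matching_def by auto

lemma F1:
  assumes g: "graph V E" and es: "edge_stable E" and mm: "maximal_matching E M"
    and e: "{u,v} \<in> M" and w: "w \<notin> {u,v}" "{u,w} \<in> E \<or> {v,w} \<in> E"
  shows "\<exists>a\<in>{u,v}. \<exists>f. f \<notin> \<Union>M \<and> {a,f} \<in> E"
proof (rule ccontr)
  assume nf: "\<not> (\<exists>a\<in>{u,v}. \<exists>f. f \<notin> \<Union>M \<and> {a,f} \<in> E)"
  let ?e = "{u,v}"
  have fin: "finite E" using graph_finite_E[OF g] .
  have eq: "equimatchable E" and eqe: "equimatchable (E - {?e})"
    using es e mm unfolding edge_stable_def maximal_matching_def matching_def by auto
  have m: "matching E M" using mm by (rule maximal_matchingD)
  have ME: "M \<subseteq> E" using m unfolding matching_def by auto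
  have finM: "finite M" using matching_finite[OF fin m] .
  have g1: "graph V (E - {?e})" using graph_mono[OF g] by auto
  have m1: "matching (E - {?e}) (M - {?e})"
    using m unfolding matching_def by auto
  have un: "\<Union>(M - {?e}) = \<Union>M - {u,v}" using Union_remove[OF m e] .
  have max1: "maximal_matching (E - {?e}) (M - {?e})"
    unfolding maximal_iff[OF g1 m1]
  proof (intro ballI notI)
    fix d assume d: "d \<in> E - {?e}" "d \<inter> \<Union>(M - {?e}) = {}"
    obtain a b where ab: "d = {a,b}" "a \<noteq> b" using graph_edge[OF g] d(1) by blast
    have "d \<inter> \<Union>M \<noteq> {}" using maximal_meets[OF g mm] d(1) by auto
    then have "a \<in> \<Union>M \<or> b \<in> \<Union>M" using ab by auto
    moreover have "a \<notin> \<Union>M - {u,v}" "b \<notin> \<Union>M - {u,v}" using d(2) un ab by auto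
    moreover have "\<not> (a \<in> {u,v} \<and> b \<in> {u,v})" using d(1) ab by auto
    moreover have "{a,b} \<in> E" using d ab by auto
    moreover have "{b,a} \<in> E" using d ab by (auto simp: insert_commute)
    ultimately show False using nf by blast
  qed
  obtain x where x: "x \<in> {u,v}" "{x,w} \<in> E" using w(2) by auto
  have xw: "{x,w} \<noteq> ?e" using w(1) by (auto simp: doubleton_eq_iff)
  have m0: "matching (E - {?e}) {{x,w}}" using x xw unfolding matching_def by auto
  obtain N where N: "maximal_matching (E - {?e}) N" "{{x,w}} \<subseteq> N"
    using extend_maximal[OF _ m0] fin by auto
  have mN: "matching E N" using maximal_matchingD[OF N(1)] unfolding matching_def by auto
  have xN: "x \<in> \<Union>N" using N(2) by auto
  have maxN: "maximal_matching E N"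
    unfolding maximal_iff[OF g mN]
  proof
    fix d assume d: "d \<in> E"
    show "d \<inter> \<Union>N \<noteq> {}"
    proof (cases "d = ?e")
      case True then show ?thesis using xN x by auto
    next
      case False then show ?thesis using maximal_meets[OF g1 N(1)] d by auto
    qed
  qed
  have c1: "card N = card M" using eq maxN mm unfolding equimatchable_def by blast
  have c2: "card N = card (M - {?e})" using eqe N(1) max1 unfolding equimatchable_def by blast
  have "card (M - {?e}) = card M - 1" using finM e by (simp add: card_Diff_singleton)
  moreover have "card M > 0" using finM e card_gt_0_iff by blast
  ultimately show False using c1 c2 by simp
qed



definition NI :: "'a set set \<Rightarrow> bool" where
  "NI E \<longleftrightarrow> (\<forall>u v. {u,v} \<in> E \<longrightarrow> (\<exists>w. w \<notin> {u,v} \<and> ({u,w} \<in> E \<or> {v,w} \<in> E)))"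

lemma F1N:
  assumes "graph V E" "edge_stable E" "NI E" "maximal_matching E M" "{u,v} \<in> M"
  shows "\<exists>a\<in>{u,v}. \<exists>f. f \<notin> \<Union>M \<and> {a,f} \<in> E"
proof -
  have "{u,v} \<in> E" using assms(4,5) unfolding maximal_matching_def matching_def by auto
  then obtain w where "w \<notin> {u,v}" "{u,w} \<in> E \<or> {v,w} \<in> E" using assms(3) unfolding NI_def by blast
  then show ?thesis using F1[OF assms(1,2,4,5)] by blast
qed

definition outs :: "'a set \<Rightarrow> 'a set set \<Rightarrow> 'a set set" where
  "outs S M = {e\<in>M. e \<inter> S = {}}"

definition BL :: "'a set \<Rightarrow> 'a set set \<Rightarrow> 'a set \<Rightarrow> 'a set set \<Rightarrow> 'a set \<Rightarrow> 'a \<Rightarrow> bool" where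
  "BL V E R M S x0 \<longleftrightarrow> maximal_matching E M \<and> x0 \<in> S \<and> S \<subseteq> V \<and> V - \<Union>M = insert x0 R \<and> x0 \<notin> R
     \<and> S \<inter> R = {} \<and> (\<exists>t\<in>S. t \<noteq> x0) \<and> (\<forall>e\<in>M. e \<inter> S \<noteq> {} \<longrightarrow> e \<subseteq> S)
     \<and> (\<forall>y\<in>S. \<exists>My. maximal_matching E My \<and> outs S My = outs S M \<and> \<Union>My = insert x0 (\<Union>M) - {y}
            \<and> (\<forall>e\<in>My. e \<inter> S \<noteq> {} \<longrightarrow> e \<subseteq> S))"

lemma BLE:
  assumes "BL V E R M S x0"
  shows "maximal_matching E M" "x0 \<in> S" "S \<subseteq> V" "V - \<Union>M = insert x0 R" "x0 \<notin> R"
     "S \<inter> R = {}" "\<exists>t\<in>S. t \<noteq> x0" "\<forall>e\<in>M. e \<inter> S \<noteq> {} \<longrightarrow> e \<subseteq> S"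
     "\<forall>y\<in>S. \<exists>My. maximal_matching E My \<and> outs S My = outs S M \<and> \<Union>My = insert x0 (\<Union>M) - {y}
            \<and> (\<forall>e\<in>My. e \<inter> S \<noteq> {} \<longrightarrow> e \<subseteq> S)"
  using assms unfolding BL_def by simp_all

lemma BL_noadj:
  assumes "BL V E R M S x0" "graph V E" "y \<in> S" "g \<in> R" "{y,g} \<in> E"
  shows False
proof -
  have "\<exists>My. maximal_matching E My \<and> outs S My = outs S M \<and> \<Union>My = insert x0 (\<Union>M) - {y}
            \<and> (\<forall>e\<in>My. e \<inter> S \<noteq> {} \<longrightarrow> e \<subseteq> S)" using BLE(9)[OF assms(1)] assms(3) by (rule bspec)
  then obtain My where My: "maximal_matching E My" "\<Union>My = insert x0 (\<Union>M) - {y}" by blast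
  have r: "V - \<Union>M = insert x0 R" "x0 \<notin> R" using BLE(4,5)[OF assms(1)] by auto
  have "g \<in> V - \<Union>M" using r assms(4) by simp
  then have "g \<notin> \<Union>M" by simp
  moreover have "g \<noteq> x0" using r assms(4) by auto
  ultimately have "g \<notin> \<Union>My" using My(2) by simp
  moreover have "y \<notin> \<Union>My" using My(2) by simp
  ultimately show False using maximal_edge_free[OF assms(2) My(1) assms(5)] by simp
qed

lemma SW:
  assumes g: "graph V E" and eq: "equimatchable E" and mm: "maximal_matching E My"
    and e: "e \<in> My" and x: "x \<notin> \<Union>My" and z: "z \<in> e" and xz: "{x,z} \<in> E"
  shows "maximal_matching E (insert {x,z} (My - {e})) \<and> \<Union>(insert {x,z} (My - {e})) = insert x (insert z (\<Union>My - e))"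
proof -
  have m: "matching E My" using mm by (rule maximal_matchingD)
  have fin: "finite E" using graph_finite_E[OF g] .
  have un: "\<Union>(My - {e}) = \<Union>My - e" using Union_remove[OF m e] .
  have m1: "matching E (My - {e})" using matching_sub[OF m] by auto
  have m2: "matching E (insert {x,z} (My - {e}))"
    using matching_insert_free[OF m1 xz] un x z by auto
  have "{x,z} \<notin> My" using x by auto
  then have "card (insert {x,z} (My - {e})) = card My"
    using card_swap1[OF matching_finite[OF fin m] e] by blast
  then have "maximal_matching E (insert {x,z} (My - {e}))"
    using eq_card_max[OF fin eq mm m2] by simp
  moreover have "\<Union>(insert {x,z} (My - {e})) = insert x (insert z (\<Union>My - e))"
    using un by auto
  ultimately show ?thesis by blast
qed

lemma H1:
  assumes "matching E M" "outs S My = outs S M" "\<forall>d\<in>My. d \<inter> S \<noteq> {} \<longrightarrow> d \<subseteq> S"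
    "e \<in> M" "d \<in> My" "d \<noteq> e" "d \<inter> (S \<union> e) \<noteq> {}"
  shows "d \<subseteq> S"
proof (rule ccontr)
  assume "\<not> d \<subseteq> S"
  then have "d \<inter> S = {}" using assms(3,5) by auto
  then have "d \<in> outs S My" using assms(5) unfolding outs_def by auto
  then have "d \<in> M" using assms(2) unfolding outs_def by auto
  moreover have "d \<inter> e \<noteq> {}" using assms(7) \<open>d \<inter> S = {}\<close> by auto
  ultimately show False using assms(1,4,6) unfolding matching_def by blast
qed

lemma H2:
  assumes "matching E M" "outs S My = outs S M" "e \<in> outs S M" "e \<noteq> {}"
  shows "outs (S \<union> e) My = outs S M - {e}"
proof
  show "outs (S \<union> e) My \<subseteq> outs S M - {e}"
    using assms(2,4) unfolding outs_def by auto
next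
  show "outs S M - {e} \<subseteq> outs (S \<union> e) My"
  proof
    fix d assume d: "d \<in> outs S M - {e}"
    then have "d \<in> My" "d \<inter> S = {}" using assms(2) unfolding outs_def by auto
    moreover have "d \<inter> e = {}" using d assms(1,3) unfolding outs_def matching_def by auto
    ultimately show "d \<in> outs (S \<union> e) My" unfolding outs_def by auto
  qed
qed

lemma H3:
  assumes "matching E M" "outs S My = outs S M" "e \<in> outs S M" "e \<noteq> {}" "d \<inter> S \<noteq> {}"
  shows "outs (S \<union> e) (insert d (My - {e})) = outs S M - {e}"
proof -
  have "outs (S \<union> e) (insert d (My - {e})) = outs (S \<union> e) My"
    using assms(4,5) unfolding outs_def by auto
  then show ?thesis using H2[OF assms(1-4)] by simp
qed



lemma BL_step:
  assumes bl: "BL V E R M S x0" and g: "graph V E" and es: "edge_stable E" and ni: "NI E"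
    and s: "s \<in> S" and sw: "{s,w} \<in> E" and wS: "w \<notin> S" and wR: "w \<notin> R"
  shows "\<exists>M' S' q. BL V E R M' S' q \<and> w \<in> S'"
proof -
  note B = BLE[OF bl]
  have mm: "maximal_matching E M" by (rule B(1))
  have m: "matching E M" using mm by (rule maximal_matchingD)
  have eq: "equimatchable E" using es unfolding edge_stable_def by simp
  let ?U = "insert x0 (\<Union>M)"
  have free: "V - \<Union>M = insert x0 R" by (rule B(4))
  have VU: "V - ?U = R" using free B(5) by auto
  have wV: "w \<in> V" using graph_edge_V[OF g sw] by simp
  have sV: "s \<in> V" using graph_edge_V[OF g sw] by simp
  have wx0: "w \<noteq> x0" using wS B(2) by auto
  have wM: "w \<in> \<Union>M"
  proof (rule ccontr)
    assume "w \<notin> \<Union>M"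
    then have "w \<in> insert x0 R" using free wV by auto
    then show False using wx0 wR by simp
  qed
  then obtain e where e: "e \<in> M" "w \<in> e" by auto
  have eE: "e \<in> E" using m e(1) unfolding matching_def by auto
  obtain a b where ab: "e = {a,b}" "a \<noteq> b" using graph_edge[OF g eE] by metis
  define q where "q = (if a = w then b else a)"
  have eq': "e = {w,q}" using ab e(2) unfolding q_def by auto
  have qw: "q \<noteq> w" using ab e(2) unfolding q_def by auto
  have eS: "e \<inter> S = {}"
  proof (rule ccontr)
    assume "e \<inter> S \<noteq> {}"
    then have "e \<subseteq> S" using B(8) e(1) by blast
    then show False using e(2) wS by auto
  qed
  have qS: "q \<notin> S" using eS eq' by auto
  have qM: "q \<in> \<Union>M" using e(1) eq' by auto
  have qV: "q \<in> V" using graph_edge_V[OF g, of w q] eE eq' by simp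
  have qR: "q \<notin> R" using qM free by auto
  have sU: "s \<in> ?U"
  proof (rule ccontr)
    assume "s \<notin> ?U"
    then have "s \<in> V - \<Union>M" "s \<noteq> x0" using sV by auto
    then have "s \<in> R" using free by auto
    then show False using B(6) s by auto
  qed
  have SU: "S \<subseteq> ?U"
  proof
    fix t assume t: "t \<in> S"
    show "t \<in> ?U"
    proof (rule ccontr)
      assume "t \<notin> ?U"
      then have "t \<in> V - \<Union>M" "t \<noteq> x0" using t B(3) by auto
      then have "t \<in> R" using free by auto
      then show False using B(6) t by auto
    qed
  qed
  have fam: "\<forall>y\<in>S. \<exists>My. maximal_matching E My \<and> outs S My = outs S M \<and> \<Union>My = ?U - {y}
            \<and> (\<forall>e\<in>My. e \<inter> S \<noteq> {} \<longrightarrow> e \<subseteq> S)" by (rule B(9))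
  obtain Ms where Ms: "maximal_matching E Ms" "outs S Ms = outs S M" "\<Union>Ms = ?U - {s}"
      "\<forall>e\<in>Ms. e \<inter> S \<noteq> {} \<longrightarrow> e \<subseteq> S"
    using bspec[OF fam s] by blast
  have eo: "e \<in> outs S M" using e(1) eS unfolding outs_def by auto
  have eMs: "e \<in> Ms" using eo Ms(2) unfolding outs_def by auto
  have sMs: "s \<notin> \<Union>Ms" using Ms(3) by auto
  define M' where "M' = insert {s,w} (Ms - {e})"
  have SWs: "maximal_matching E M' \<and> \<Union>M' = insert s (insert w (\<Union>Ms - e))"
    unfolding M'_def by (rule SW[OF g eq Ms(1) eMs sMs e(2) sw])
  have mmM': "maximal_matching E M'" using SWs by simp
  have qs: "q \<noteq> s" using qS s by auto
  have UM': "\<Union>M' = ?U - {q}"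
    using SWs Ms(3) eq' sU wM qs qw by auto
  have qM': "q \<notin> \<Union>M'" using UM' by simp
  have freeM': "V - \<Union>M' = insert q R" using UM' VU qV by auto
  define S' where "S' = S \<union> e"
  have wS': "w \<in> S'" using e(2) unfolding S'_def by simp
  have qS': "q \<in> S'" using eq' unfolding S'_def by simp
  have ene: "e \<noteq> {}" using e(2) by auto
  have outsM': "outs S' M' = outs S M - {e}"
    unfolding M'_def S'_def by (rule H3[OF m Ms(2) eo ene]) (use s in auto)
  have inM': "\<forall>d\<in>M'. d \<inter> S' \<noteq> {} \<longrightarrow> d \<subseteq> S'"
  proof (intro ballI impI)
    fix d assume d: "d \<in> M'" "d \<inter> S' \<noteq> {}"
    show "d \<subseteq> S'"
    proof (cases "d = {s,w}")
      case True then show ?thesis using s wS' unfolding S'_def by auto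
    next
      case False
      then have "d \<in> Ms" "d \<noteq> e" using d(1) unfolding M'_def by auto
      then have "d \<subseteq> S" using H1[OF m Ms(2) Ms(4) e(1)] d(2) unfolding S'_def by blast
      then show ?thesis unfolding S'_def by auto
    qed
  qed
  obtain t where t: "t \<in> S" "t \<noteq> s"
  proof (cases "s = x0")
    case True then show ?thesis using B(7) that by blast
  next
    case False then show ?thesis using B(2) that by blast
  qed
  have tMs: "t \<in> \<Union>Ms" using Ms(3) SU t by auto
  then obtain d where d: "d \<in> Ms" "t \<in> d" by auto
  have dS: "d \<subseteq> S" using Ms(4) d t(1) by blast
  have de: "d \<noteq> e" using dS eS e(2) by auto
  have dM': "d \<in> M'" using d(1) de unfolding M'_def by auto
  have dE: "d \<in> E" using Ms(1) d(1) unfolding maximal_matching_def matching_def by auto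
  obtain a1 b1 where d1: "d = {a1,b1}" using graph_edge[OF g dE] by metis
  obtain a2 f where af: "a2 \<in> {a1,b1}" "f \<notin> \<Union>M'" "{a2,f} \<in> E"
    using F1N[OF g es ni mmM'] dM' d1 by blast
  have a2S: "a2 \<in> S" using af(1) d1 dS by auto
  have fV: "f \<in> V" using graph_edge_V[OF g af(3)] by simp
  have "f \<in> insert q R" using freeM' fV af(2) by auto
  moreover have "f \<notin> R" using BL_noadj[OF bl g a2S _ af(3)] by blast
  ultimately have fq: "f = q" by simp
  have a2s: "a2 \<noteq> s" using sMs d(1) af(1) d1 by auto
  obtain Ma where Ma: "maximal_matching E Ma" "outs S Ma = outs S M" "\<Union>Ma = ?U - {a2}"
      "\<forall>e\<in>Ma. e \<inter> S \<noteq> {} \<longrightarrow> e \<subseteq> S"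
    using bspec[OF fam a2S] by blast
  have eMa: "e \<in> Ma" using eo Ma(2) unfolding outs_def by auto
  have aMa: "a2 \<notin> \<Union>Ma" using Ma(3) by auto
  have qe: "q \<in> e" using eq' by simp
  define Mw where "Mw = insert {a2,q} (Ma - {e})"
  have SWa: "maximal_matching E Mw \<and> \<Union>Mw = insert a2 (insert q (\<Union>Ma - e))"
    unfolding Mw_def by (rule SW[OF g eq Ma(1) eMa aMa qe]) (use af(3) fq in simp)
  have a2U: "a2 \<in> ?U" using SU a2S by auto
  have a2w: "a2 \<noteq> w" using a2S wS by auto
  have UMw: "\<Union>Mw = ?U - {w}"
    using SWa Ma(3) eq' a2U qM qw a2w by auto
  have outsMw: "outs S' Mw = outs S M - {e}"
    unfolding Mw_def S'_def by (rule H3[OF m Ma(2) eo ene]) (use a2S in auto)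
  have inMw: "\<forall>d\<in>Mw. d \<inter> S' \<noteq> {} \<longrightarrow> d \<subseteq> S'"
  proof (intro ballI impI)
    fix d assume d: "d \<in> Mw" "d \<inter> S' \<noteq> {}"
    show "d \<subseteq> S'"
    proof (cases "d = {a2,q}")
      case True then show ?thesis using a2S qS' unfolding S'_def by auto
    next
      case False
      then have "d \<in> Ma" "d \<noteq> e" using d(1) unfolding Mw_def by auto
      then have "d \<subseteq> S" using H1[OF m Ma(2) Ma(4) e(1)] d(2) unfolding S'_def by blast
      then show ?thesis unfolding S'_def by auto
    qed
  qed
  have famS': "\<forall>y\<in>S'. \<exists>My. maximal_matching E My \<and> outs S' My = outs S' M' \<and> \<Union>My = insert q (\<Union>M') - {y}
            \<and> (\<forall>e\<in>My. e \<inter> S' \<noteq> {} \<longrightarrow> e \<subseteq> S')"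
  proof
    fix y assume y: "y \<in> S'"
    have Uq: "insert q (\<Union>M') = ?U" using UM' qM by auto
    consider "y = q" | "y = w" | "y \<in> S" using y eq' unfolding S'_def by auto
    then show "\<exists>My. maximal_matching E My \<and> outs S' My = outs S' M' \<and> \<Union>My = insert q (\<Union>M') - {y}
            \<and> (\<forall>e\<in>My. e \<inter> S' \<noteq> {} \<longrightarrow> e \<subseteq> S')"
    proof cases
      case 1
      then show ?thesis using mmM' inM' qM' by (intro exI[of _ M']) auto
    next
      case 2
      then show ?thesis using SWa UMw outsMw outsM' inMw Uq by (intro exI[of _ Mw]) auto
    next
      case 3
      obtain My where My: "maximal_matching E My" "outs S My = outs S M" "\<Union>My = ?U - {y}"
          "\<forall>e\<in>My. e \<inter> S \<noteq> {} \<longrightarrow> e \<subseteq> S"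
        using bspec[OF fam 3] by blast
      have o: "outs S' My = outs S M - {e}"
        unfolding S'_def by (rule H2[OF m My(2) eo ene])
      have i: "\<forall>d\<in>My. d \<inter> S' \<noteq> {} \<longrightarrow> d \<subseteq> S'"
      proof (intro ballI impI)
        fix d assume d: "d \<in> My" "d \<inter> S' \<noteq> {}"
        show "d \<subseteq> S'"
        proof (cases "d = e")
          case True then show ?thesis unfolding S'_def by auto
        next
          case False
          then have "d \<subseteq> S" using H1[OF m My(2) My(4) e(1) d(1)] d(2) unfolding S'_def by blast
          then show ?thesis unfolding S'_def by auto
        qed
      qed
      show ?thesis using My(1) My(3) o outsM' i Uq by (intro exI[of _ My]) auto
    qed
  qed
  have "BL V E R M' S' q"
    unfolding BL_def
  proof (intro conjI)
    show "maximal_matching E M'" by (rule mmM')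
    show "q \<in> S'" by (rule qS')
    show "S' \<subseteq> V" using B(3) eE eq' wV qV unfolding S'_def by auto
    show "V - \<Union>M' = insert q R" by (rule freeM')
    show "q \<notin> R" by (rule qR)
    show "S' \<inter> R = {}" using B(6) wR qR eq' unfolding S'_def by auto
    show "\<exists>t\<in>S'. t \<noteq> q" using s qs unfolding S'_def by auto
    show "\<forall>e\<in>M'. e \<inter> S' \<noteq> {} \<longrightarrow> e \<subseteq> S'" by (rule inM')
    show "\<forall>y\<in>S'. \<exists>My. maximal_matching E My \<and> outs S' My = outs S' M' \<and> \<Union>My = insert q (\<Union>M') - {y}
            \<and> (\<forall>e\<in>My. e \<inter> S' \<noteq> {} \<longrightarrow> e \<subseteq> S')" by (rule famS')
  qed
  then show ?thesis using wS' by blast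
qed



lemma BL_false_n:
  assumes g: "graph V E" and es: "edge_stable E" and ni: "NI E"
  shows "(s,gg) \<in> {(x,y). {x,y} \<in> E} ^^ n \<Longrightarrow> BL V E R M S x0 \<Longrightarrow> s \<in> S \<Longrightarrow> gg \<in> R \<Longrightarrow> False"
proof (induction n arbitrary: s M S x0)
  case 0
  then have "s = gg" by simp
  then show ?case using BLE(6)[OF 0(2)] 0(3,4) by auto
next
  case (Suc n)
  obtain w where w: "(s,w) \<in> {(x,y). {x,y} \<in> E}" "(w,gg) \<in> {(x,y). {x,y} \<in> E} ^^ n"
    using relpow_Suc_D2[OF Suc(2)] by blast
  have sw: "{s,w} \<in> E" using w(1) by simp
  show ?case
  proof (cases "w \<in> S")
    case True show ?thesis by (rule Suc.IH[OF w(2) Suc(3) True Suc(5)])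
  next
    case False
    show ?thesis
    proof (cases "w \<in> R")
      case True show ?thesis by (rule BL_noadj[OF Suc(3) g Suc(4) True sw])
    next
      case False2: False
      obtain M' S' q where "BL V E R M' S' q" "w \<in> S'"
        using BL_step[OF Suc(3) g es ni Suc(4) sw False False2] by blast
      then show ?thesis using Suc.IH[OF w(2) _ _ Suc(5)] by blast
    qed
  qed
qed

lemma BL_false:
  assumes g: "graph V E" and es: "edge_stable E" and ni: "NI E" and c: "connected_graph V E"
    and bl: "BL V E R M S x0" and gg: "gg \<in> R"
  shows False
proof -
  have x0V: "x0 \<in> V" using BLE(2,3)[OF bl] by auto
  have "gg \<in> V" using BLE(4)[OF bl] gg by blast
  then have "(x0,gg) \<in> {(x,y). {x,y} \<in> E}\<^sup>*" using c x0V unfolding connected_graph_def by blast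
  then obtain n where "(x0,gg) \<in> {(x,y). {x,y} \<in> E} ^^ n" using rtrancl_imp_relpow by blast
  then show False using BL_false_n[OF g es ni _ bl BLE(2)[OF bl] gg] by blast
qed



lemma famX:
  assumes m: "matching E M" and fin: "finite E" and inM: "\<forall>e\<in>M. e \<inter> S \<noteq> {} \<longrightarrow> e \<subseteq> S"
    and X: "X \<subseteq> M" and Xs: "\<forall>e\<in>X. e \<inter> S \<noteq> {}" and D: "D \<subseteq> E"
    and Ds: "\<forall>d\<in>D. d \<subseteq> S \<and> d \<noteq> {}"
    and Dm: "\<forall>d1\<in>D. \<forall>d2\<in>D. d1 \<noteq> d2 \<longrightarrow> d1 \<inter> d2 = {}"
    and Dd: "\<Union>D \<inter> \<Union>(M - X) = {}" and cD: "card D = card X"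
  shows "matching E (D \<union> (M - X)) \<and> card (D \<union> (M - X)) = card M \<and> outs S (D \<union> (M - X)) = outs S M
     \<and> \<Union>(D \<union> (M - X)) = \<Union>D \<union> (\<Union>M - \<Union>X) \<and> (\<forall>e\<in>D \<union> (M - X). e \<inter> S \<noteq> {} \<longrightarrow> e \<subseteq> S)"
proof (intro conjI)
  have ME: "M \<subseteq> E" using m unfolding matching_def by simp
  have finM: "finite M" using matching_finite[OF fin m] .
  have finX: "finite X" using finM X finite_subset by blast
  have finD: "finite D" using fin D finite_subset by blast
  show "matching E (D \<union> (M - X))"
    unfolding matching_def
  proof (intro conjI ballI impI)
    show "D \<union> (M - X) \<subseteq> E" using D ME by auto
    fix e1 e2 assume e: "e1 \<in> D \<union> (M - X)" "e2 \<in> D \<union> (M - X)" "e1 \<noteq> e2"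
    show "e1 \<inter> e2 = {}"
    proof (cases "e1 \<in> D")
      case True
      show ?thesis
      proof (cases "e2 \<in> D")
        case True then show ?thesis using Dm \<open>e1 \<in> D\<close> e(3) by blast
      next
        case False then have "e2 \<in> M - X" using e(2) by simp
        then show ?thesis using Dd \<open>e1 \<in> D\<close> by blast
      qed
    next
      case False
      then have e1M: "e1 \<in> M - X" using e(1) by simp
      show ?thesis
      proof (cases "e2 \<in> D")
        case True then show ?thesis using Dd e1M by blast
      next
        case False then have "e2 \<in> M - X" using e(2) by simp
        then show ?thesis using m e1M e(3) unfolding matching_def by blast
      qed
    qed
  qed
  have disj: "D \<inter> (M - X) = {}"
  proof (rule ccontr)
    assume "D \<inter> (M - X) \<noteq> {}"
    then obtain d where d: "d \<in> D" "d \<in> M - X" by blast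
    then obtain x where "x \<in> d" using Ds by blast
    then show False using Dd d by blast
  qed
  have "card (D \<union> (M - X)) = card D + card (M - X)"
    using card_Un_disjoint[OF finD _ disj] finM by simp
  moreover have "card (M - X) = card M - card X" using card_Diff_subset[OF finX X] .
  moreover have "card X \<le> card M" using card_mono[OF finM X] .
  ultimately show "card (D \<union> (M - X)) = card M" using cD by simp
  show "outs S (D \<union> (M - X)) = outs S M"
    unfolding outs_def using Ds Xs by auto
  show "\<Union>(D \<union> (M - X)) = \<Union>D \<union> (\<Union>M - \<Union>X)"
  proof -
    have "\<Union>(M - X) = \<Union>M - \<Union>X"
    proof
      show "\<Union>(M - X) \<subseteq> \<Union>M - \<Union>X"
      proof
        fix x assume "x \<in> \<Union>(M - X)"
        then obtain e where e: "e \<in> M" "e \<notin> X" "x \<in> e" by blast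
        have "x \<notin> \<Union>X"
        proof
          assume "x \<in> \<Union>X"
          then obtain e' where "e' \<in> X" "x \<in> e'" by blast
          then have "e' = e" using matching_unique[OF m] e X by blast
          then show False using e \<open>e' \<in> X\<close> by simp
        qed
        then show "x \<in> \<Union>M - \<Union>X" using e by blast
      qed
      show "\<Union>M - \<Union>X \<subseteq> \<Union>(M - X)" by blast
    qed
    then show ?thesis by auto
  qed
  show "\<forall>e\<in>D \<union> (M - X). e \<inter> S \<noteq> {} \<longrightarrow> e \<subseteq> S" using Ds inM by blast
qed

lemma BL_intro:
  assumes g: "graph V E" and eq: "equimatchable E" and mm: "maximal_matching E M"
    and x0: "x0 \<in> S" and SV: "S \<subseteq> V" and x0M: "x0 \<notin> \<Union>M" and t: "\<exists>t\<in>S. t \<noteq> x0"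
    and SM: "S - {x0} \<subseteq> \<Union>M" and inM: "\<forall>e\<in>M. e \<inter> S \<noteq> {} \<longrightarrow> e \<subseteq> S"
    and fam: "\<forall>y\<in>S. \<exists>My. matching E My \<and> card My = card M \<and> outs S My = outs S M
       \<and> \<Union>My = insert x0 (\<Union>M) - {y} \<and> (\<forall>e\<in>My. e \<inter> S \<noteq> {} \<longrightarrow> e \<subseteq> S)"
  shows "BL V E (V - \<Union>M - {x0}) M S x0"
  unfolding BL_def
proof (intro conjI)
  have fin: "finite E" using graph_finite_E[OF g] .
  show "maximal_matching E M" by fact
  show "x0 \<in> S" by fact
  show "S \<subseteq> V" by fact
  show "V - \<Union>M = insert x0 (V - \<Union>M - {x0})" using x0 SV x0M by auto
  show "x0 \<notin> V - \<Union>M - {x0}" by simp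
  show "S \<inter> (V - \<Union>M - {x0}) = {}" using SM by auto
  show "\<exists>t\<in>S. t \<noteq> x0" by fact
  show "\<forall>e\<in>M. e \<inter> S \<noteq> {} \<longrightarrow> e \<subseteq> S" by fact
  show "\<forall>y\<in>S. \<exists>My. maximal_matching E My \<and> outs S My = outs S M \<and> \<Union>My = insert x0 (\<Union>M) - {y}
            \<and> (\<forall>e\<in>My. e \<inter> S \<noteq> {} \<longrightarrow> e \<subseteq> S)"
  proof
    fix y assume y: "y \<in> S"
    obtain My where My: "matching E My" "card My = card M" "outs S My = outs S M"
       "\<Union>My = insert x0 (\<Union>M) - {y}" "\<forall>e\<in>My. e \<inter> S \<noteq> {} \<longrightarrow> e \<subseteq> S"
      using bspec[OF fam y] by (elim exE conjE) simp
    have "maximal_matching E My" using eq_card_max[OF fin eq mm My(1,2)] .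
    then show "\<exists>My. maximal_matching E My \<and> outs S My = outs S M \<and> \<Union>My = insert x0 (\<Union>M) - {y}
            \<and> (\<forall>e\<in>My. e \<inter> S \<noteq> {} \<longrightarrow> e \<subseteq> S)" using My(3-5) by (intro exI[of _ My]) simp
  qed
qed



lemma UX: assumes "matching E M" "X \<subseteq> M" "x \<in> \<Union>X" shows "x \<notin> \<Union>(M - X)"
proof
  assume "x \<in> \<Union>(M - X)"
  then obtain e where e: "e \<in> M" "e \<notin> X" "x \<in> e" by blast
  obtain e' where e': "e' \<in> X" "x \<in> e'" using assms(3) by blast
  have "e' \<in> M" using e' assms(2) by blast
  then have "e = e'" using matching_unique[OF assms(1) \<open>e' \<in> M\<close> e(1) e'(2) e(3)] by simp
  then show False using e e' by simp
qed

lemma famY: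
  assumes m: "matching E M" and fin: "finite E" and inM: "\<forall>e\<in>M. e \<inter> S \<noteq> {} \<longrightarrow> e \<subseteq> S"
    and X: "X \<subseteq> M" and Xs: "\<forall>e\<in>X. e \<inter> S \<noteq> {}" and D: "D \<subseteq> E"
    and Ds: "\<forall>d\<in>D. d \<subseteq> S \<and> d \<noteq> {}"
    and Dm: "\<forall>d1\<in>D. \<forall>d2\<in>D. d1 \<noteq> d2 \<longrightarrow> d1 \<inter> d2 = {}"
    and Dd: "\<forall>x\<in>\<Union>D. x \<notin> \<Union>M \<or> x \<in> \<Union>X" and cD: "card D = card X"
    and U: "\<Union>D \<union> (\<Union>M - \<Union>X) = insert x0 (\<Union>M) - {y}"
  shows "\<exists>My. matching E My \<and> card My = card M \<and> outs S My = outs S M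
       \<and> \<Union>My = insert x0 (\<Union>M) - {y} \<and> (\<forall>e\<in>My. e \<inter> S \<noteq> {} \<longrightarrow> e \<subseteq> S)"
proof -
  have "\<Union>D \<inter> \<Union>(M - X) = {}"
  proof (rule ccontr)
    assume "\<Union>D \<inter> \<Union>(M - X) \<noteq> {}"
    then obtain x where x: "x \<in> \<Union>D" "x \<in> \<Union>(M - X)" by blast
    have "x \<in> \<Union>M" using x(2) by blast
    then have "x \<in> \<Union>X" using Dd x(1) by blast
    then show False using UX[OF m X] x(2) by blast
  qed
  note r = famX[OF m fin inM X Xs D Ds Dm this cD]
  show ?thesis using r U by (intro exI[of _ "D \<union> (M - X)"]) simp
qed

lemma tri_BL:
  assumes g: "graph V E" and eq: "equimatchable E" and mm: "maximal_matching E M"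
    and e: "{a1,a2} \<in> M" and f: "f \<notin> \<Union>M" and f1: "{f,a1} \<in> E" and f2: "{f,a2} \<in> E"
  shows "BL V E (V - \<Union>M - {f}) M {f,a1,a2} f"
proof -
  have m: "matching E M" using mm by (rule maximal_matchingD)
  have fin: "finite E" using graph_finite_E[OF g] .
  have ME: "M \<subseteq> E" using m unfolding matching_def by simp
  have a12: "a1 \<noteq> a2" using graph_edge_neq[OF g] e ME by blast
  have aM: "a1 \<in> \<Union>M" "a2 \<in> \<Union>M" using e by auto
  have fa: "f \<noteq> a1" "f \<noteq> a2" using f aM by auto
  have fV: "f \<in> V" "a1 \<in> V" "a2 \<in> V" using graph_edge_V[OF g f1] graph_edge_V[OF g f2] by auto
  have inM: "\<forall>e\<in>M. e \<inter> {f,a1,a2} \<noteq> {} \<longrightarrow> e \<subseteq> {f,a1,a2}"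
  proof (intro ballI impI)
    fix d assume d: "d \<in> M" "d \<inter> {f,a1,a2} \<noteq> {}"
    have "f \<notin> d" using d(1) f by blast
    then have "a1 \<in> d \<or> a2 \<in> d" using d(2) by blast
    then have "d = {a1,a2}" using matching_unique[OF m e d(1)] by auto
    then show "d \<subseteq> {f,a1,a2}" by auto
  qed
  show ?thesis
  proof (rule BL_intro[OF g eq mm])
    show "f \<in> {f,a1,a2}" by simp
    show "{f,a1,a2} \<subseteq> V" using fV by simp
    show "f \<notin> \<Union>M" by fact
    show "\<exists>t\<in>{f,a1,a2}. t \<noteq> f" using fa by auto
    show "{f,a1,a2} - {f} \<subseteq> \<Union>M" using aM by auto
    show "\<forall>e\<in>M. e \<inter> {f,a1,a2} \<noteq> {} \<longrightarrow> e \<subseteq> {f,a1,a2}" by fact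
    show "\<forall>y\<in>{f,a1,a2}. \<exists>My. matching E My \<and> card My = card M \<and> outs {f,a1,a2} My = outs {f,a1,a2} M
       \<and> \<Union>My = insert f (\<Union>M) - {y} \<and> (\<forall>e\<in>My. e \<inter> {f,a1,a2} \<noteq> {} \<longrightarrow> e \<subseteq> {f,a1,a2})"
    proof
      fix y assume y: "y \<in> {f,a1,a2}"
      then consider "y = f" | "y = a1" | "y = a2" by blast
      then show "\<exists>My. matching E My \<and> card My = card M \<and> outs {f,a1,a2} My = outs {f,a1,a2} M
       \<and> \<Union>My = insert f (\<Union>M) - {y} \<and> (\<forall>e\<in>My. e \<inter> {f,a1,a2} \<noteq> {} \<longrightarrow> e \<subseteq> {f,a1,a2})"
      proof cases
        case 1 then show ?thesis using m inM f by (intro exI[of _ M]) auto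
      next
        case 2
        show ?thesis
          by (rule famY[OF m fin inM, of "{{a1,a2}}" "{{f,a2}}"]) (use e f2 fa a12 aM 2 f in auto)
      next
        case 3
        show ?thesis
          by (rule famY[OF m fin inM, of "{{a1,a2}}" "{{f,a1}}"]) (use e f1 fa a12 aM 3 f in auto)
      qed
    qed
  qed
qed



lemma C5_BL:
  assumes g: "graph V E" and eq: "equimatchable E" and mm: "maximal_matching E M"
    and e1: "{a1,b1} \<in> M" and e2: "{a2,b2} \<in> M" and ne: "{a1,b1} \<noteq> {a2,b2}"
    and f: "f \<notin> \<Union>M" and f1: "{f,a1} \<in> E" and f2: "{f,a2} \<in> E" and bb: "{b1,b2} \<in> E"
  shows "BL V E (V - \<Union>M - {f}) M {f,a1,b1,b2,a2} f"
proof -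
  let ?S = "{f,a1,b1,b2,a2}"
  have m: "matching E M" using mm by (rule maximal_matchingD)
  have fin: "finite E" using graph_finite_E[OF g] .
  have ME: "M \<subseteq> E" using m unfolding matching_def by simp
  have d1: "a1 \<noteq> b1" using graph_edge_neq[OF g] e1 ME by blast
  have d2: "a2 \<noteq> b2" using graph_edge_neq[OF g] e2 ME by blast
  have mdis: "\<forall>x\<in>M. \<forall>y\<in>M. x \<noteq> y \<longrightarrow> x \<inter> y = {}" using m unfolding matching_def by simp
  have dis: "{a1,b1} \<inter> {a2,b2} = {}" using bspec[OF bspec[OF mdis e1] e2] ne by simp
  then have dd: "a1 \<noteq> a2" "a1 \<noteq> b2" "b1 \<noteq> a2" "b1 \<noteq> b2" by auto
  have aM: "a1 \<in> \<Union>M" "a2 \<in> \<Union>M" "b1 \<in> \<Union>M" "b2 \<in> \<Union>M" using e1 e2 by auto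
  have fa: "f \<noteq> a1" "f \<noteq> a2" "f \<noteq> b1" "f \<noteq> b2" using f aM by auto
  have fV: "f \<in> V" "a1 \<in> V" "a2 \<in> V" "b1 \<in> V" "b2 \<in> V"
    using graph_edge_V[OF g f1] graph_edge_V[OF g f2] graph_edge_V[OF g bb] by auto
  have inM: "\<forall>e\<in>M. e \<inter> ?S \<noteq> {} \<longrightarrow> e \<subseteq> ?S"
  proof (intro ballI impI)
    fix d assume d: "d \<in> M" "d \<inter> ?S \<noteq> {}"
    have "f \<notin> d" using d(1) f by blast
    then have "a1 \<in> d \<or> b1 \<in> d \<or> a2 \<in> d \<or> b2 \<in> d" using d(2) by blast
    then have "d = {a1,b1} \<or> d = {a2,b2}"
      using matching_unique[OF m e1 d(1)] matching_unique[OF m e2 d(1)] by auto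
    then show "d \<subseteq> ?S" by auto
  qed
  have c2: "card {{a1,b1},{a2,b2}} = 2" using ne by simp
  have c2a: "card {{f,a2},{b1,b2}} = 2" using fa by (simp add: doubleton_eq_iff)
  have c2b: "card {{f,a1},{b1,b2}} = 2" using fa by (simp add: doubleton_eq_iff)
  show ?thesis
  proof (rule BL_intro[OF g eq mm])
    show "f \<in> ?S" by simp
    show "?S \<subseteq> V" using fV by simp
    show "f \<notin> \<Union>M" by fact
    show "\<exists>t\<in>?S. t \<noteq> f" using fa by auto
    show "?S - {f} \<subseteq> \<Union>M" using aM by auto
    show "\<forall>e\<in>M. e \<inter> ?S \<noteq> {} \<longrightarrow> e \<subseteq> ?S" by fact
    show "\<forall>y\<in>?S. \<exists>My. matching E My \<and> card My = card M \<and> outs ?S My = outs ?S M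
       \<and> \<Union>My = insert f (\<Union>M) - {y} \<and> (\<forall>e\<in>My. e \<inter> ?S \<noteq> {} \<longrightarrow> e \<subseteq> ?S)"
    proof
      fix y assume y: "y \<in> ?S"
      then consider "y = f" | "y = a1" | "y = b1" | "y = b2" | "y = a2" by blast
      then show "\<exists>My. matching E My \<and> card My = card M \<and> outs ?S My = outs ?S M
       \<and> \<Union>My = insert f (\<Union>M) - {y} \<and> (\<forall>e\<in>My. e \<inter> ?S \<noteq> {} \<longrightarrow> e \<subseteq> ?S)"
      proof cases
        case 1 then show ?thesis using m inM f by (intro exI[of _ M]) auto
      next
        case 2
        show ?thesis
          by (rule famY[OF m fin inM, of "{{a1,b1},{a2,b2}}" "{{f,a2},{b1,b2}}"])
            (use e1 e2 f2 bb fa dd d1 d2 aM 2 f c2 c2a in auto)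
      next
        case 3
        show ?thesis
          by (rule famY[OF m fin inM, of "{{a1,b1}}" "{{f,a1}}"])
            (use e1 f1 fa dd d1 aM 3 f in auto)
      next
        case 4
        show ?thesis
          by (rule famY[OF m fin inM, of "{{a2,b2}}" "{{f,a2}}"])
            (use e2 f2 fa dd d2 aM 4 f in auto)
      next
        case 5
        show ?thesis
          by (rule famY[OF m fin inM, of "{{a1,b1},{a2,b2}}" "{{f,a1},{b1,b2}}"])
            (use e1 e2 f1 bb fa dd d1 d2 aM 5 f c2 c2b in auto)
      qed
    qed
  qed
qed



lemma swapDX:
  assumes m: "matching E M" and fin: "finite E" and X: "X \<subseteq> M" and D: "D \<subseteq> E"
    and Dne: "\<forall>d\<in>D. d \<noteq> {}"
    and Dm: "\<forall>d1\<in>D. \<forall>d2\<in>D. d1 \<noteq> d2 \<longrightarrow> d1 \<inter> d2 = {}"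
    and Dd: "\<forall>x\<in>\<Union>D. x \<notin> \<Union>M \<or> x \<in> \<Union>X"
  shows "matching E (D \<union> (M - X)) \<and> card (D \<union> (M - X)) = card D + (card M - card X)
     \<and> \<Union>(D \<union> (M - X)) = \<Union>D \<union> (\<Union>M - \<Union>X)"
proof (intro conjI)
  have ME: "M \<subseteq> E" using m unfolding matching_def by simp
  have finM: "finite M" using matching_finite[OF fin m] .
  have finX: "finite X" using finM X finite_subset by blast
  have finD: "finite D" using fin D finite_subset by blast
  have Dd': "\<Union>D \<inter> \<Union>(M - X) = {}"
  proof (rule ccontr)
    assume "\<Union>D \<inter> \<Union>(M - X) \<noteq> {}"
    then obtain x where x: "x \<in> \<Union>D" "x \<in> \<Union>(M - X)" by blast
    have "x \<in> \<Union>M" using x(2) by blast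
    then have "x \<in> \<Union>X" using Dd x(1) by blast
    then show False using UX[OF m X] x(2) by blast
  qed
  show "matching E (D \<union> (M - X))"
    unfolding matching_def
  proof (intro conjI ballI impI)
    show "D \<union> (M - X) \<subseteq> E" using D ME by auto
    fix e1 e2 assume e: "e1 \<in> D \<union> (M - X)" "e2 \<in> D \<union> (M - X)" "e1 \<noteq> e2"
    show "e1 \<inter> e2 = {}"
    proof (cases "e1 \<in> D")
      case True
      show ?thesis
      proof (cases "e2 \<in> D")
        case True then show ?thesis using Dm \<open>e1 \<in> D\<close> e(3) by blast
      next
        case False then have "e2 \<in> M - X" using e(2) by simp
        then show ?thesis using Dd' \<open>e1 \<in> D\<close> by blast
      qed
    next
      case False
      then have e1M: "e1 \<in> M - X" using e(1) by simp
      show ?thesis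
      proof (cases "e2 \<in> D")
        case True then show ?thesis using Dd' e1M by blast
      next
        case False then have "e2 \<in> M - X" using e(2) by simp
        then show ?thesis using m e1M e(3) unfolding matching_def by blast
      qed
    qed
  qed
  have disj: "D \<inter> (M - X) = {}"
  proof (rule ccontr)
    assume "D \<inter> (M - X) \<noteq> {}"
    then obtain d where d: "d \<in> D" "d \<in> M - X" by blast
    then obtain x where "x \<in> d" using Dne by blast
    then show False using Dd' d by blast
  qed
  have "card (D \<union> (M - X)) = card D + card (M - X)"
    using card_Un_disjoint[OF finD _ disj] finM by simp
  moreover have "card (M - X) = card M - card X" using card_Diff_subset[OF finX X] .
  ultimately show "card (D \<union> (M - X)) = card D + (card M - card X)" by simp
  have "\<Union>(M - X) = \<Union>M - \<Union>X"
  proof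
    show "\<Union>(M - X) \<subseteq> \<Union>M - \<Union>X" using UX[OF m X] by blast
    show "\<Union>M - \<Union>X \<subseteq> \<Union>(M - X)" by blast
  qed
  then show "\<Union>(D \<union> (M - X)) = \<Union>D \<union> (\<Union>M - \<Union>X)" by auto
qed

context
  fixes V :: "'a set" and E M and f0 g0 :: 'a
  assumes g: "graph V E" and es: "edge_stable E" and ni: "NI E" and cn: "connected_graph V E"
    and mm: "maximal_matching E M" and fr: "f0 \<in> V - \<Union>M" "g0 \<in> V - \<Union>M" "f0 \<noteq> g0"
begin

lemma eqm: "equimatchable E" using es unfolding edge_stable_def by simp
lemma mM: "matching E M" using mm by (rule maximal_matchingD)
lemma finE: "finite E" using graph_finite_E[OF g] .
lemma finM: "finite M" using matching_finite[OF finE mM] .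
lemma ME: "M \<subseteq> E" using mM unfolding matching_def by simp

lemma eqcard: "maximal_matching E N \<Longrightarrow> card N = card M"
  using eqm mm unfolding equimatchable_def by blast

lemma blossom_false:
  assumes "BL V E (V - \<Union>M - {f}) M S f"
  shows False
proof -
  obtain gg where "gg \<in> {f0,g0}" "gg \<noteq> f" using fr(3) by auto
  then have "gg \<in> V - \<Union>M - {f}" using fr by auto
  then show False using BL_false[OF g es ni cn assms] by blast
qed

lemma bigger_false:
  assumes "matching E N" "card N > card M" shows False
  using eq_card_le[OF finE eqm mm assms(1)] assms(2) by simp

definition Out where "Out = {a \<in> \<Union>M. \<exists>f. f \<notin> \<Union>M \<and> {a,f} \<in> E}"

lemma MOO:
  assumes e: "{u,v} \<in> M" and u: "u \<in> Out" and v: "v \<in> Out"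
  shows False
proof -
  obtain f1 where f1: "f1 \<notin> \<Union>M" "{u,f1} \<in> E" using u unfolding Out_def by blast
  obtain f2 where f2: "f2 \<notin> \<Union>M" "{v,f2} \<in> E" using v unfolding Out_def by blast
  have uM: "u \<in> \<Union>M" "v \<in> \<Union>M" using e by auto
  have uv: "u \<noteq> v" using graph_edge_neq[OF g] e ME by blast
  show False
  proof (cases "f1 = f2")
    case True
    have "BL V E (V - \<Union>M - {f1}) M {f1,u,v} f1"
      by (rule tri_BL[OF g eqm mm e f1(1)]) (use f1 f2 True in \<open>auto simp: insert_commute\<close>)
    then show False by (rule blossom_false)
  next
    case False
    let ?D = "{{f1,u},{v,f2}}"
    have fu: "f1 \<noteq> u" "f1 \<noteq> v" "f2 \<noteq> u" "f2 \<noteq> v" using f1 f2 uM by auto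
    note r = swapDX[OF mM finE, of "{{u,v}}" ?D]
    have "matching E (?D \<union> (M - {{u,v}})) \<and> card (?D \<union> (M - {{u,v}})) = card ?D + (card M - card {{u,v}})
     \<and> \<Union>(?D \<union> (M - {{u,v}})) = \<Union>?D \<union> (\<Union>M - \<Union>{{u,v}})"
      by (rule r) (use e f1 f2 fu False uv in \<open>auto simp: insert_commute\<close>)
    moreover have "card ?D = 2" using fu False by (auto simp: doubleton_eq_iff)
    moreover have "card M \<ge> 1" using finM e by (metis One_nat_def Suc_leI card_gt_0_iff empty_iff)
    ultimately show False using bigger_false by fastforce
  qed
qed


lemma partner:
  assumes "u \<in> \<Union>M" obtains u' where "{u,u'} \<in> M" "u' \<noteq> u"
proof -
  obtain e where e: "e \<in> M" "u \<in> e" using assms by blast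
  then obtain a b where ab: "e = {a,b}" "a \<noteq> b" using graph_edge[OF g] ME by blast
  show ?thesis
  proof (cases "a = u")
    case True then show ?thesis using that e ab by auto
  next
    case False then have "b = u" using e ab by auto
    then show ?thesis using that e ab False by (auto simp: insert_commute)
  qed
qed

lemma pair_facts:
  assumes eu: "{u,u'} \<in> M" and ev: "{v,v'} \<in> M" and uv: "u \<noteq> v" and nm: "{u,v} \<notin> M"
  shows "{u,u'} \<noteq> {v,v'}" "{u,u'} \<inter> {v,v'} = {}"
proof -
  show ne: "{u,u'} \<noteq> {v,v'}"
  proof
    assume h: "{u,u'} = {v,v'}"
    then have "u = v'" "u' = v" using uv by (auto simp: doubleton_eq_iff)
    then show False using nm eu by (simp add: insert_commute)
  qed
  have mdis: "\<forall>x\<in>M. \<forall>y\<in>M. x \<noteq> y \<longrightarrow> x \<inter> y = {}" using mM unfolding matching_def by simp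
  show "{u,u'} \<inter> {v,v'} = {}" using bspec[OF bspec[OF mdis eu] ev] ne by simp
qed

lemma other_out:
  assumes eu: "{u,u'} \<in> M" and u: "u \<notin> Out"
  obtains f where "f \<notin> \<Union>M" "{u',f} \<in> E"
proof -
  obtain a f where af: "a \<in> {u,u'}" "f \<notin> \<Union>M" "{a,f} \<in> E" using F1N[OF g es ni mm eu] by blast
  have "a \<noteq> u" using u af eu unfolding Out_def by auto
  then show ?thesis using that af by auto
qed

lemma InIn:
  assumes e: "{u,v} \<in> E" and uM: "u \<in> \<Union>M" and vM: "v \<in> \<Union>M" and u: "u \<notin> Out" and v: "v \<notin> Out"
    and nm: "{u,v} \<notin> M"
  shows False
proof -
  have uv: "u \<noteq> v" using graph_edge_neq[OF g e] .
  obtain u' where eu: "{u,u'} \<in> M" "u' \<noteq> u" using partner[OF uM] by blast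
  obtain v' where ev: "{v,v'} \<in> M" "v' \<noteq> v" using partner[OF vM] by blast
  obtain f1 where f1: "f1 \<notin> \<Union>M" "{u',f1} \<in> E" using other_out[OF eu(1) u] by blast
  obtain f2 where f2: "f2 \<notin> \<Union>M" "{v',f2} \<in> E" using other_out[OF ev(1) v] by blast
  note pf = pair_facts[OF eu(1) ev(1) uv nm]
  have inM: "u \<in> \<Union>M" "u' \<in> \<Union>M" "v \<in> \<Union>M" "v' \<in> \<Union>M" using eu ev by auto
  have dd: "u \<noteq> v'" "u' \<noteq> v" "u' \<noteq> v'" using pf(2) by auto
  show False
  proof (cases "f1 = f2")
    case True
    have "BL V E (V - \<Union>M - {f1}) M {f1,u',u,v,v'} f1"
      by (rule C5_BL[OF g eqm mm]) (use eu ev pf f1 f2 True e in \<open>auto simp: insert_commute\<close>)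
    then show False by (rule blossom_false)
  next
    case False
    let ?D = "{{f1,u'},{u,v},{v',f2}}"
    let ?X = "{{u,u'},{v,v'}}"
    have fx: "f1 \<notin> {u,u',v,v'}" "f2 \<notin> {u,u',v,v'}" using f1 f2 inM by auto
    have r: "matching E (?D \<union> (M - ?X)) \<and> card (?D \<union> (M - ?X)) = card ?D + (card M - card ?X)
     \<and> \<Union>(?D \<union> (M - ?X)) = \<Union>?D \<union> (\<Union>M - \<Union>?X)"
      by (rule swapDX[OF mM finE]) (use eu ev f1 f2 e fx False uv dd in \<open>auto simp: insert_commute\<close>)
    have cD: "card ?D = 3" using fx False uv dd by (auto simp: doubleton_eq_iff)
    have cX: "card ?X = 2" using pf(1) by simp
    have "card ?X \<le> card M" using card_mono[OF finM] eu ev by (metis empty_subsetI insert_subset)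
    then show False using bigger_false r cD cX by fastforce
  qed
qed

lemma OutOut:
  assumes e: "{u,v} \<in> E" and u: "u \<in> Out" and v: "v \<in> Out" and nm: "{u,v} \<notin> M"
  shows False
proof -
  have uv: "u \<noteq> v" using graph_edge_neq[OF g e] .
  have uM: "u \<in> \<Union>M" "v \<in> \<Union>M" using u v unfolding Out_def by auto
  obtain u' where eu: "{u,u'} \<in> M" "u' \<noteq> u" using partner[OF uM(1)] by blast
  obtain v' where ev: "{v,v'} \<in> M" "v' \<noteq> v" using partner[OF uM(2)] by blast
  have u': "u' \<notin> Out" using MOO[OF eu(1) u] by blast
  have v': "v' \<notin> Out" using MOO[OF ev(1) v] by blast
  note pf = pair_facts[OF eu(1) ev(1) uv nm]
  have inM: "u \<in> \<Union>M" "u' \<in> \<Union>M" "v \<in> \<Union>M" "v' \<in> \<Union>M" using eu ev by auto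
  have dd: "u \<noteq> v'" "u' \<noteq> v" "u' \<noteq> v'" using pf(2) by auto
  let ?X = "{{u,u'},{v,v'}}"
  have cX: "card ?X = 2" using pf(1) by simp
  have XM: "card ?X \<le> card M" using card_mono[OF finM] eu ev by (metis empty_subsetI insert_subset)
  let ?D1 = "{{u,v}}"
  have r1: "matching E (?D1 \<union> (M - ?X)) \<and> card (?D1 \<union> (M - ?X)) = card ?D1 + (card M - card ?X)
     \<and> \<Union>(?D1 \<union> (M - ?X)) = \<Union>?D1 \<union> (\<Union>M - \<Union>?X)"
    by (rule swapDX[OF mM finE]) (use eu ev e in auto)
  have c1: "card (?D1 \<union> (M - ?X)) < card M" using r1 cX XM by simp
  have nmax: "\<not> maximal_matching E (?D1 \<union> (M - ?X))"
    using c1 eqcard by (metis less_irrefl)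
  then obtain d where d: "d \<in> E" "d \<inter> \<Union>(?D1 \<union> (M - ?X)) = {}"
    using maximal_iff[OF g] r1 by blast
  obtain x y where xy: "d = {x,y}" "x \<noteq> y" using graph_edge[OF g d(1)] by blast
  have U1: "\<Union>(?D1 \<union> (M - ?X)) = {u,v} \<union> (\<Union>M - {u,u',v,v'})" using r1 by auto
  have cx: "x \<notin> \<Union>M \<or> x \<in> {u',v'}" "y \<notin> \<Union>M \<or> y \<in> {u',v'}" using d(2) xy U1 by auto
  have dE: "{x,y} \<in> E" "{y,x} \<in> E" using d xy by (auto simp: insert_commute)
  have "x \<in> {u',v'} \<and> y \<in> {u',v'}"
  proof (rule ccontr)
    assume "\<not> (x \<in> {u',v'} \<and> y \<in> {u',v'})"
    then consider "x \<notin> \<Union>M" "y \<notin> \<Union>M" | "x \<notin> \<Union>M" "y \<in> {u',v'}" | "y \<notin> \<Union>M" "x \<in> {u',v'}"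
      using cx by blast
    then show False
    proof cases
      case 1 then show False using maximal_edge_free[OF g mm dE(1)] by blast
    next
      case 2 then have "y \<in> Out" using dE(2) inM unfolding Out_def by auto
      then show False using 2 u' v' by auto
    next
      case 3 then have "x \<in> Out" using dE(1) inM unfolding Out_def by auto
      then show False using 3 u' v' by auto
    qed
  qed
  then have uv': "{u',v'} \<in> E" using dE xy by (auto simp: doubleton_eq_iff insert_commute)
  let ?D2 = "{{u,v},{u',v'}}"
  have r2: "matching E (?D2 \<union> (M - ?X)) \<and> card (?D2 \<union> (M - ?X)) = card ?D2 + (card M - card ?X)
     \<and> \<Union>(?D2 \<union> (M - ?X)) = \<Union>?D2 \<union> (\<Union>M - \<Union>?X)"
    by (rule swapDX[OF mM finE]) (use eu ev e uv' dd uv in \<open>auto simp: insert_commute\<close>)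
  have cD2: "card ?D2 = 2" using dd eu(2) by (auto simp: doubleton_eq_iff)
  have mx: "maximal_matching E (?D2 \<union> (M - ?X))"
    using eq_card_max[OF finE eqm mm] r2 cD2 cX XM by simp
  have U2: "\<Union>(?D2 \<union> (M - ?X)) = \<Union>M" using r2 inM by auto
  have "{u',v'} \<in> ?D2 \<union> (M - ?X)" by simp
  then obtain a f where af: "a \<in> {u',v'}" "f \<notin> \<Union>M" "{a,f} \<in> E"
    using F1N[OF g es ni mx] U2 by metis
  then have "a \<in> Out" using inM unfolding Out_def by auto
  then show False using af(1) u' v' by auto
qed

lemma bip2: "bipartite V E"
  unfolding bipartite_def
proof (intro exI conjI)
  show "Out \<inter> (V - Out) = {}" by auto
  have "Out \<subseteq> V" using graph_Union[OF g ME] unfolding Out_def by auto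
  then show "Out \<union> (V - Out) = V" by auto
  show "\<forall>e\<in>E. \<exists>a\<in>Out. \<exists>b\<in>V - Out. e = {a,b}"
  proof
    fix e assume e: "e \<in> E"
    obtain u v where uv: "e = {u,v}" "u \<noteq> v" "u \<in> V" "v \<in> V" using graph_edge[OF g e] by blast
    have eu: "{u,v} \<in> E" "{v,u} \<in> E" using e uv by (auto simp: insert_commute)
    have key: "(u \<in> Out \<and> v \<notin> Out) \<or> (v \<in> Out \<and> u \<notin> Out)"
    proof (rule ccontr)
      assume nk: "\<not> ?thesis"
      then consider "u \<in> Out" "v \<in> Out" | "u \<notin> Out" "v \<notin> Out" by blast
      then show False
      proof cases
        case 1
        show False
        proof (cases "{u,v} \<in> M")
          case True then show False using MOO 1 by blast
        next
          case False show False by (rule OutOut[OF eu(1) 1 False])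
        qed
      next
        case 2
        show False
        proof (cases "u \<in> \<Union>M")
          case uM: True
          show False
          proof (cases "v \<in> \<Union>M")
            case vM: True
            show False
            proof (cases "{u,v} \<in> M")
              case True
              obtain a f where "a \<in> {u,v}" "f \<notin> \<Union>M" "{a,f} \<in> E" using F1N[OF g es ni mm True] by blast
              then show False using 2 uM vM unfolding Out_def by auto
            next
              case False show False by (rule InIn[OF eu(1) uM vM 2 False])
            qed
          next
            case False then show False using eu(1) uM 2 unfolding Out_def by auto
          qed
        next
          case uM: False
          show False
          proof (cases "v \<in> \<Union>M")
            case True then show False using eu(2) uM 2 unfolding Out_def by auto
          next
            case False then show False using maximal_edge_free[OF g mm eu(1) uM] by blast
          qed
        qed
      qed
    qed
    then show "\<exists>a\<in>Out. \<exists>b\<in>V - Out. e = {a,b}" using uv by (auto simp: insert_commute)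
  qed
qed
end



lemma partner0:
  assumes g: "graph V E" and m: "matching E M" and u: "u \<in> \<Union>M"
  shows "\<exists>u'. {u,u'} \<in> M \<and> u' \<noteq> u"
proof -
  obtain e where e: "e \<in> M" "u \<in> e" using u by blast
  have "e \<in> E" using m e unfolding matching_def by auto
  then obtain a b where ab: "e = {a,b}" "a \<noteq> b" using graph_edge[OF g] by blast
  show ?thesis
  proof (cases "a = u")
    case True then show ?thesis using e ab by auto
  next
    case False then have "b = u" using e ab by auto
    then show ?thesis using e ab False by (auto simp: insert_commute)
  qed
qed

lemma sym_Rc:
  assumes "(a,b) \<in> {(x,y). {x,y} \<in> del_vertex c E}\<^sup>*"
  shows "(b,a) \<in> {(x,y). {x,y} \<in> del_vertex c E}\<^sup>*"
proof -
  have "sym {(x,y). {x,y} \<in> del_vertex c E}" unfolding sym_def by (auto simp: insert_commute)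
  then have "sym ({(x,y). {x,y} \<in> del_vertex c E}\<^sup>*)" by (rule sym_rtrancl)
  then show ?thesis using assms unfolding sym_def by blast
qed

lemma Rc_step: "{a,b} \<in> E \<Longrightarrow> a \<noteq> c \<Longrightarrow> b \<noteq> c \<Longrightarrow> (a,b) \<in> {(x,y). {x,y} \<in> del_vertex c E}"
  unfolding del_vertex_def by auto

lemma walk_first:
  assumes "(x,c) \<in> {(a,b). {a,b} \<in> E}\<^sup>*"
  shows "x \<noteq> c \<Longrightarrow> \<exists>u. (x,u) \<in> {(a,b). {a,b} \<in> del_vertex c E}\<^sup>* \<and> {u,c} \<in> E"
  using assms
proof (induction x rule: converse_rtrancl_induct)
  case base then show ?case by simp
next
  case (step x y)
  show ?case
  proof (cases "y = c")
    case True then show ?thesis using step.hyps(1) by auto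
  next
    case False
    then obtain u where u: "(y,u) \<in> {(a,b). {a,b} \<in> del_vertex c E}\<^sup>*" "{u,c} \<in> E" using step.IH by blast
    have "(x,y) \<in> {(a,b). {a,b} \<in> del_vertex c E}" using Rc_step step.hyps(1) step.prems False by auto
    then show ?thesis using u by (meson converse_rtrancl_into_rtrancl)
  qed
qed

lemma esc:
  assumes "(a,z) \<in> {(x,y). {x,y} \<in> E}\<^sup>*"
  shows "a \<in> {u,v} \<Longrightarrow> z \<notin> {u,v} \<Longrightarrow> \<exists>p\<in>{u,v}. \<exists>w. w \<notin> {u,v} \<and> {p,w} \<in> E"
  using assms
proof (induction a rule: converse_rtrancl_induct)
  case base then show ?case by simp
next
  case (step a b)
  show ?case
  proof (cases "b \<in> {u,v}")
    case True then show ?thesis using step.IH step.prems by blast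
  next
    case False then show ?thesis using step.hyps(1) step.prems by auto
  qed
qed

lemma NI_from:
  assumes g: "graph V E" and cn: "connected_graph V E" and cv: "cut_vertex V E c"
  shows "NI E"
  unfolding NI_def
proof (intro allI impI)
  fix u v assume e: "{u,v} \<in> E"
  obtain x y where xy: "x \<in> V" "y \<in> V" "x \<noteq> c" "y \<noteq> c" "c \<in> V"
      "(x,y) \<notin> {(a,b). {a,b} \<in> del_vertex c E}\<^sup>*"
    using cv unfolding cut_vertex_def by blast
  have "x \<noteq> y" using xy(6) by auto
  then obtain z where z: "z \<in> {c,x,y}" "z \<notin> {u,v}" using xy(3,4) by auto
  have "z \<in> V" using z xy by auto
  moreover have "u \<in> V" using graph_edge_V[OF g e] by simp
  ultimately have "(u,z) \<in> {(a,b). {a,b} \<in> E}\<^sup>*" using cn unfolding connected_graph_def by blast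
  then have "\<exists>p\<in>{u,v}. \<exists>w. w \<notin> {u,v} \<and> {p,w} \<in> E"
    by (rule esc) (use z(2) in simp_all)
  then show "\<exists>w. w \<notin> {u,v} \<and> ({u,w} \<in> E \<or> {v,w} \<in> E)" by auto
qed

context
  fixes V :: "'a set" and E M and f c p :: 'a
  assumes g: "graph V E" and es: "edge_stable E" and ni: "NI E"
    and mm: "maximal_matching E M" and fr: "V - \<Union>M = {f}" and cp: "{c,p} \<in> M"
begin

lemma dep1_reach:
  assumes z: "z \<in> V" "z \<noteq> c" "z \<noteq> p"
  shows "(z,f) \<in> {(a,b). {a,b} \<in> del_vertex c E}\<^sup>*"
proof (cases "z = f")
  case True then show ?thesis by simp
next
  case False
  have mM: "matching E M" using mm by (rule maximal_matchingD)
  have ME: "M \<subseteq> E" using mM unfolding matching_def by simp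
  have "z \<in> \<Union>M" using z False fr by auto
  then obtain d where d: "d \<in> M" "z \<in> d" by blast
  obtain a b where ab: "d = {a,b}" "a \<noteq> b" using graph_edge[OF g] d ME by blast
  define z' where "z' = (if a = z then b else a)"
  have dz: "d = {z,z'}" using ab d(2) unfolding z'_def by auto
  have z'c: "z' \<noteq> c"
  proof
    assume "z' = c"
    then have "d = {c,p}" using matching_unique[OF mM cp d(1)] dz by auto
    then show False using z dz by (auto simp: doubleton_eq_iff)
  qed
  obtain q f' where qf: "q \<in> {z,z'}" "f' \<notin> \<Union>M" "{q,f'} \<in> E" using F1N[OF g es ni mm] d(1) dz by blast
  have "f' \<in> V" using graph_edge_V[OF g qf(3)] by simp
  then have ff: "f' = f" using qf(2) fr by auto
  have fc: "f \<noteq> c" using fr cp by auto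
  have qc: "q \<noteq> c" using qf(1) z'c z(2) by auto
  have dE: "{z,z'} \<in> E" using d dz ME by auto
  have s1: "(z,q) \<in> {(a,b). {a,b} \<in> del_vertex c E}\<^sup>*"
    using qf(1) Rc_step[OF dE z(2) z'c] by auto
  have s2: "(q,f) \<in> {(a,b). {a,b} \<in> del_vertex c E}"
    using Rc_step[OF _ qc fc] qf(3) ff by simp
  show ?thesis using s1 s2 by (rule rtrancl_into_rtrancl)
qed

lemma dep1_G:
  assumes cv: "cut_vertex V E c"
  shows "(\<forall>z. (p,z) \<in> {(a,b). {a,b} \<in> del_vertex c E}\<^sup>* \<longrightarrow> z = p) \<and> {c,f} \<in> E"
proof -
  have mM: "matching E M" using mm by (rule maximal_matchingD)
  have ME: "M \<subseteq> E" using mM unfolding matching_def by simp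
  obtain x y where xy: "x \<in> V" "y \<in> V" "x \<noteq> c" "y \<noteq> c"
      "(x,y) \<notin> {(a,b). {a,b} \<in> del_vertex c E}\<^sup>*"
    using cv unfolding cut_vertex_def by blast
  have pc: "p \<noteq> c" using graph_edge_neq[OF g] cp ME by blast
  have pf: "(p,f) \<notin> {(a,b). {a,b} \<in> del_vertex c E}\<^sup>*"
  proof
    assume h: "(p,f) \<in> {(a,b). {a,b} \<in> del_vertex c E}\<^sup>*"
    have all: "\<And>z. z \<in> V \<Longrightarrow> z \<noteq> c \<Longrightarrow> (z,f) \<in> {(a,b). {a,b} \<in> del_vertex c E}\<^sup>*"
      using dep1_reach h by blast
    have xf: "(x,f) \<in> {(a,b). {a,b} \<in> del_vertex c E}\<^sup>*" and yf: "(y,f) \<in> {(a,b). {a,b} \<in> del_vertex c E}\<^sup>*"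
      using all xy by auto
    have "(f,y) \<in> {(a,b). {a,b} \<in> del_vertex c E}\<^sup>*" using yf by (rule sym_Rc)
    with xf have "(x,y) \<in> {(a,b). {a,b} \<in> del_vertex c E}\<^sup>*" by (rule rtrancl_trans)
    then show False using xy(5) by simp
  qed
  have comp: "\<forall>z. (p,z) \<in> {(a,b). {a,b} \<in> del_vertex c E}\<^sup>* \<longrightarrow> z = p"
  proof (intro allI impI)
    fix z assume pz: "(p,z) \<in> {(a,b). {a,b} \<in> del_vertex c E}\<^sup>*"
    show "z = p"
    proof (rule ccontr)
      assume zp: "z \<noteq> p"
      obtain w where "(w,z) \<in> {(a,b). {a,b} \<in> del_vertex c E}"
        using pz zp by (metis rtranclE)
      then have "{w,z} \<in> E" "z \<noteq> c" unfolding del_vertex_def by auto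
      then have "z \<in> V" "z \<noteq> c" using graph_edge_V[OF g] by auto
      then have "(z,f) \<in> {(a,b). {a,b} \<in> del_vertex c E}\<^sup>*" using dep1_reach zp by blast
      then show False using pz pf by (meson rtrancl_trans)
    qed
  qed
  obtain q f' where qf: "q \<in> {c,p}" "f' \<notin> \<Union>M" "{q,f'} \<in> E" using F1N[OF g es ni mm cp] by blast
  have "f' \<in> V" using graph_edge_V[OF g qf(3)] by simp
  then have ff: "f' = f" using qf(2) fr by auto
  have fc: "f \<noteq> c" using fr cp by auto
  have "q \<noteq> p"
  proof
    assume "q = p"
    then have "(p,f) \<in> {(a,b). {a,b} \<in> del_vertex c E}" using Rc_step[OF _ pc fc] qf(3) ff by simp
    then show False using pf by blast
  qed
  then have "{c,f} \<in> E" using qf ff by auto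
  then show ?thesis using comp by blast
qed

end

lemma dep1:
  assumes g: "graph V E" and es: "edge_stable E" and ni: "NI E" and cn: "connected_graph V E"
    and mm: "maximal_matching E M" and fr: "V - \<Union>M = {f}" and cv: "cut_vertex V E c"
  shows "bipartite V E"
proof -
  let ?R = "{(a,b). {a,b} \<in> del_vertex c E}"
  have mM: "matching E M" using mm by (rule maximal_matchingD)
  have ME: "M \<subseteq> E" using mM unfolding matching_def by simp
  have fin: "finite E" using graph_finite_E[OF g] .
  have eq: "equimatchable E" using es unfolding edge_stable_def by simp
  obtain x y where xy: "x \<in> V" "y \<in> V" "x \<noteq> c" "y \<noteq> c" "c \<in> V" "(x,y) \<notin> ?R\<^sup>*"
    using cv unfolding cut_vertex_def by blast
  show ?thesis
  proof (cases "c \<in> \<Union>M")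
    case False
    then have cf: "c = f" using xy(5) fr by auto
    have "(x,c) \<in> {(a,b). {a,b} \<in> E}\<^sup>*" using cn xy unfolding connected_graph_def by blast
    then have "\<exists>u. (x,u) \<in> ?R\<^sup>* \<and> {u,c} \<in> E" by (rule walk_first[OF _ xy(3)])
    then obtain u where u: "(x,u) \<in> ?R\<^sup>*" "{u,c} \<in> E" by blast
    have uc: "u \<noteq> c" using graph_edge_neq[OF g u(2)] .
    have "u \<in> V" using graph_edge_V[OF g u(2)] by simp
    then have "u \<in> \<Union>M" using uc cf fr by auto
    then obtain v where uv: "{u,v} \<in> M" "v \<noteq> u" using partner0[OF g mM] by blast
    have vc: "v \<noteq> c" using uv False by auto
    have cu: "{c,u} \<in> E" using u(2) by (simp add: insert_commute)
    have sw: "maximal_matching E (insert {c,u} (M - {{u,v}})) \<and> \<Union>(insert {c,u} (M - {{u,v}})) = insert c (insert u (\<Union>M - {u,v}))"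
      by (rule SW[OF g eq mm uv(1) False _ cu]) simp
    let ?M' = "insert {c,u} (M - {{u,v}})"
    have vV: "v \<in> V" using graph_edge_V[OF g, of u v] uv ME by auto
    have fr': "V - \<Union>?M' = {v}" using sw fr cf vV vc uv(2) by auto
    have xv: "(x,v) \<in> ?R\<^sup>*"
    proof -
      have "{u,v} \<in> E" using uv ME by auto
      then have uvR: "(u,v) \<in> ?R" using Rc_step uc vc by simp
      show ?thesis by (rule rtrancl_into_rtrancl[OF u(1) uvR])
    qed
    have yv: "y \<noteq> v" using xv xy(6) by auto
    have "y \<in> \<Union>?M'" using fr' xy(2) yv by auto
    then obtain d where d: "d \<in> ?M'" "y \<in> d" by blast
    have mM': "matching E ?M'" using sw maximal_matchingD by blast
    have dE: "d \<in> E" using d mM' unfolding matching_def by auto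
    obtain a b where ab: "d = {a,b}" "a \<noteq> b" using graph_edge[OF g dE] by blast
    define z where "z = (if a = y then b else a)"
    have dz: "d = {y,z}" using ab d(2) unfolding z_def by auto
    have zc: "z \<noteq> c"
    proof
      assume "z = c"
      then have "d = {c,u}" using matching_unique[OF mM' _ d(1)] dz by auto
      then have "y = u" using dz xy(4) by (auto simp: doubleton_eq_iff)
      then show False using u(1) xy(6) by simp
    qed
    obtain q f' where qf: "q \<in> {y,z}" "f' \<notin> \<Union>?M'" "{q,f'} \<in> E"
      using F1N[OF g es ni] sw d(1) dz by metis
    have "f' \<in> V" using graph_edge_V[OF g qf(3)] by simp
    then have ff: "f' = v" using qf(2) fr' by auto
    have qc: "q \<noteq> c" using qf(1) zc xy(4) by auto
    have dE': "{y,z} \<in> E" using dE dz by simp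
    have "(y,q) \<in> ?R\<^sup>*" using qf(1) Rc_step[OF dE' xy(4) zc] by auto
    moreover have "(q,v) \<in> ?R" using Rc_step[OF _ qc vc] qf(3) ff by simp
    ultimately have "(y,v) \<in> ?R\<^sup>*" by (rule rtrancl_into_rtrancl)
    then have vy: "(v,y) \<in> ?R\<^sup>*" by (rule sym_Rc)
    have "(x,y) \<in> ?R\<^sup>*" by (rule rtrancl_trans[OF xv vy])
    then show ?thesis using xy(6) by simp
  next
    case True
    then obtain p where cp: "{c,p} \<in> M" "p \<noteq> c" using partner0[OF g mM] by blast
    have G1: "(\<forall>z. (p,z) \<in> ?R\<^sup>* \<longrightarrow> z = p) \<and> {c,f} \<in> E" using dep1_G[OF g es ni mm fr cp(1) cv] .
    have fM: "f \<notin> \<Union>M" using fr by auto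
    have pe: "p \<in> {c,p}" by simp
    have sw: "maximal_matching E (insert {c,f} (M - {{c,p}})) \<and> \<Union>(insert {c,f} (M - {{c,p}})) = insert c (insert f (\<Union>M - {c,p}))"
    proof -
      have "{f,c} \<in> E" using G1 by (simp add: insert_commute)
      have r: "maximal_matching E (insert {f,c} (M - {{c,p}})) \<and> \<Union>(insert {f,c} (M - {{c,p}})) = insert f (insert c (\<Union>M - {c,p}))"
        by (rule SW[OF g eq mm cp(1) fM _ \<open>{f,c} \<in> E\<close>]) simp
      then show ?thesis by (simp add: insert_commute)
    qed
    let ?M' = "insert {c,f} (M - {{c,p}})"
    have pV: "p \<in> V" using graph_edge_V[OF g, of c p] cp ME by auto
    have fc: "f \<noteq> c" using True fM by auto
    have fp: "f \<noteq> p" using fM cp by auto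
    have fr': "V - \<Union>?M' = {p}" using sw fr pV cp(2) fp by auto
    have cfM: "{c,f} \<in> ?M'" by simp
    have G2: "(\<forall>z. (f,z) \<in> ?R\<^sup>* \<longrightarrow> z = f)" using dep1_G[OF g es ni _ fr' cfM cv] sw by blast
    have Vs: "V \<subseteq> {c,p,f}"
    proof
      fix z assume z: "z \<in> V"
      show "z \<in> {c,p,f}"
      proof (rule ccontr)
        assume "z \<notin> {c,p,f}"
        then have "(z,f) \<in> ?R\<^sup>*" using dep1_reach[OF g es ni mm fr cp(1) z] by auto
        then have "(f,z) \<in> ?R\<^sup>*" by (rule sym_Rc)
        then have "z = f" using G2 by blast
        then show False using \<open>z \<notin> {c,p,f}\<close> by simp
      qed
    qed
    have npf: "{p,f} \<notin> E"
    proof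
      assume "{p,f} \<in> E"
      then have "(p,f) \<in> ?R" using Rc_step cp(2) fc by simp
      then have "f = p" using G1 by blast
      then show False using fp by simp
    qed
    show ?thesis unfolding bipartite_def
    proof (intro exI conjI)
      show "{c} \<inter> (V - {c}) = {}" by auto
      show "{c} \<union> (V - {c}) = V" using xy(5) by auto
      show "\<forall>e\<in>E. \<exists>a\<in>{c}. \<exists>b\<in>V - {c}. e = {a,b}"
      proof
        fix e assume e: "e \<in> E"
        obtain a b where ab: "e = {a,b}" "a \<noteq> b" "a \<in> V" "b \<in> V" using graph_edge[OF g e] by blast
        have "c \<in> e"
        proof (rule ccontr)
          assume "c \<notin> e"
          then have "a \<in> {p,f}" "b \<in> {p,f}" using ab Vs by auto
          then have "e = {p,f}" using ab by auto
          then show False using e npf by simp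
        qed
        then show "\<exists>a\<in>{c}. \<exists>b\<in>V - {c}. e = {a,b}" using ab by (auto simp: insert_commute)
      qed
    qed
  qed
qed



theorem theorem4p1:
  assumes "graph V E"
    and "connected_graph V E"
    and "edge_stable E"
    and "\<exists>v. cut_vertex V E v"
  shows "bipartite V E"
proof -
  note g = assms(1) and cn = assms(2) and es = assms(3)
  obtain c where cv: "cut_vertex V E c" using assms(4) by blast
  have ni: "NI E" by (rule NI_from[OF g cn cv])
  have fin: "finite E" using graph_finite_E[OF g] .
  have "matching E {}" unfolding matching_def by simp
  then obtain M where mm: "maximal_matching E M" using extend_maximal[OF fin] by blast
  have mM: "matching E M" using mm by (rule maximal_matchingD)
  have ME: "M \<subseteq> E" using mM unfolding matching_def by simp
  obtain x y where xy: "x \<in> V" "y \<in> V" "x \<noteq> c" "y \<noteq> c" "c \<in> V"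
    using cv unfolding cut_vertex_def by blast
  show ?thesis
  proof (cases "V - \<Union>M = {}")
    case True
    have "(x,c) \<in> {(a,b). {a,b} \<in> E}\<^sup>*" using cn xy unfolding connected_graph_def by blast
    then have "\<exists>u. (x,u) \<in> {(a,b). {a,b} \<in> del_vertex c E}\<^sup>* \<and> {u,c} \<in> E" by (rule walk_first[OF _ xy(3)])
    then obtain u where u: "{u,c} \<in> E" by blast
    then have "{u,c} \<inter> \<Union>M \<noteq> {}" using maximal_meets[OF g mm] by blast
    then obtain e where e: "e \<in> M" by blast
    obtain a b where ab: "e = {a,b}" using graph_edge[OF g] e ME by blast
    obtain q f where qf: "q \<in> {a,b}" "f \<notin> \<Union>M" "{q,f} \<in> E" using F1N[OF g es ni mm] e ab by blast
    have "f \<in> V" using graph_edge_V[OF g qf(3)] by simp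
    then show ?thesis using True qf(2) by auto
  next
    case False
    then obtain f where f: "f \<in> V - \<Union>M" by blast
    show ?thesis
    proof (cases "V - \<Union>M = {f}")
      case True then show ?thesis using dep1[OF g es ni cn mm True cv] by simp
    next
      case False
      then obtain h where h: "h \<in> V - \<Union>M" "h \<noteq> f" using f by blast
      show ?thesis by (rule bip2[OF g es ni cn mm f h(1) h(2)[symmetric]])
    qed
  qed
qed



end
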